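(* Let $\mathbf{P}=[\mathbf{Q}_1\ \mathbf{Q}_2]\in\mathbb{R}^{n\times d}$ with $\mathbf{Q}_1\in\mathbb{R}^{n\times d'}$, $\mathbf{Q}_2\in\mathbb{R}^{n\times d''}$, $d=d'+d''$. If one of $\mathbf{Q}_1,\mathbf{Q}_2$ is (sufficiently) node-identifying, then $\mathbf{P}$ is (sufficiently) node-identifying. If one of $\mathbf{Q}_1,\mathbf{Q}_2$ is (sufficiently) adjacency-identifying, then $\mathbf{P}$ is (sufficiently) adjacency-identifying. If $\mathbf{Q}_1$ is (sufficiently) node-identifying and $\mathbf{Q}_2$ is (sufficiently) adjacency-identifying, or vice versa, then $\mathbf{P}$ is (sufficiently) node- and adjacency-identifying.
   Context: $G$ is a graph with $n$ nodes and adjacency matrix $\mathbf{A}(G)$; $d_k>0$ is a fixed constant. A matrix $\mathbf{R}\in\mathbb{R}^{n\times e}$ is node-identifying if there exist $\mathbf{W}^Q,\mathbf{W}^K\in\mathbb{R}^{e\times e}$ such that $\tilde{\mathbf{R}}=\frac{1}{\sqrt{d_k}}\mathbf{R}\mathbf{W}^Q(\mathbf{R}\mathbf{W}^K)^T$ satisfies $\tilde{\mathbf{R}}_{ij}=\max_k\tilde{\mathbf{R}}_{ik}\iff i=j$; adjacency-identifying if for some such matrices $\tilde{\mathbf{R}}_{ij}=\max_k\tilde{\mathbf{R}}_{ik}\iff\mathbf{A}(G)_{ij}=1$; node- and adjacency-identifying if it is both (possibly with different projection matrices). A matrix depending on learnable parameters is sufficiently node-identifying (resp. adjacency-identifying)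 if there is a node-identifying (resp. adjacency-identifying) matrix $\mathbf{R}^*$ such that for every $\varepsilon>0$ some parameter choice makes it lie within Frobenius distance $\varepsilon$ of $\mathbf{R}^*$. The parenthetical "(sufficiently)" is to be read consistently throughout each sentence: either all occurrences or none. *)

theory Defs
  imports Complex_Main
begin

text \<open>Matrices are represented as functions nat => nat => real; an n x e matrix
  only uses the entries with row index < n and column index < e.\<close>

type_synonym mat = "nat \<Rightarrow> nat \<Rightarrow> real"

definition adj_matrix :: "(nat \<Rightarrow> nat \<Rightarrow> bool) \<Rightarrow> mat" where
  "adj_matrix E i j = (if E i j then 1 else 0)"

text \<open>The score matrix  (1/sqrt dk) * (R WQ) (R WK)^T  for R of size n x e, WQ, WK of size e x e.\<close>
definition scores :: "nat \<Rightarrow> real \<Rightarrow> mat \<Rightarrow> mat \<Rightarrow> mat \<Rightarrow> mat" where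
  "scores e dk R WQ WK i j =
     (1 / sqrt dk) * (\<Sum>a<e. (\<Sum>b<e. R i b * WQ b a) * (\<Sum>c<e. R j c * WK c a))"

definition node_identifying :: "nat \<Rightarrow> nat \<Rightarrow> real \<Rightarrow> mat \<Rightarrow> bool" where
  "node_identifying n e dk R \<longleftrightarrow>
     (\<exists>WQ WK. \<forall>i<n. \<forall>j<n.
        (scores e dk R WQ WK i j = (MAX k\<in>{..<n}. scores e dk R WQ WK i k)) \<longleftrightarrow> i = j)"

definition adjacency_identifying ::
    "(nat \<Rightarrow> nat \<Rightarrow> bool) \<Rightarrow> nat \<Rightarrow> nat \<Rightarrow> real \<Rightarrow> mat \<Rightarrow> bool" where
  "adjacency_identifying E n e dk R \<longleftrightarrow>
     (\<exists>WQ WK. \<forall>i<n. \<forall>j<n.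
        (scores e dk R WQ WK i j = (MAX k\<in>{..<n}. scores e dk R WQ WK i k))
          \<longleftrightarrow> adj_matrix E i j = 1)"

definition node_adjacency_identifying ::
    "(nat \<Rightarrow> nat \<Rightarrow> bool) \<Rightarrow> nat \<Rightarrow> nat \<Rightarrow> real \<Rightarrow> mat \<Rightarrow> bool" where
  "node_adjacency_identifying E n e dk R \<longleftrightarrow>
     node_identifying n e dk R \<and> adjacency_identifying E n e dk R"

definition frob_dist :: "nat \<Rightarrow> nat \<Rightarrow> mat \<Rightarrow> mat \<Rightarrow> real" where
  "frob_dist n e R S = sqrt (\<Sum>i<n. \<Sum>j<e. (R i j - S i j)\<^sup>2)"

definition sufficiently :: "(mat \<Rightarrow> bool) \<Rightarrow> nat \<Rightarrow> nat \<Rightarrow> ('p \<Rightarrow> mat) \<Rightarrow> bool" where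
  "sufficiently Prop n e R \<longleftrightarrow>
     (\<exists>Rs. Prop Rs \<and> (\<forall>\<epsilon>>0. \<exists>\<theta>. frob_dist n e (R \<theta>) Rs < \<epsilon>))"

definition hconcat :: "nat \<Rightarrow> mat \<Rightarrow> mat \<Rightarrow> mat" where
  "hconcat d1 Q1 Q2 i j = (if j < d1 then Q1 i j else Q2 i (j - d1))"

end

theory Submission
  imports Defs
begin

lemma sum_split_add: "(\<Sum>j<d1+d2. f j) = (\<Sum>j<d1. f j) + (\<Sum>j<d2. f (d1 + j))" for f :: "nat \<Rightarrow> real"
  by (induction d2) (simp_all add: add.assoc)

definition emb1 :: "nat \<Rightarrow> mat \<Rightarrow> mat" where
  "emb1 d1 W b a = (if b < d1 \<and> a < d1 then W b a else 0)"

definition emb2 :: "nat \<Rightarrow> mat \<Rightarrow> mat" where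
  "emb2 d1 W b a = (if d1 \<le> b \<and> d1 \<le> a then W (b - d1) (a - d1) else 0)"

lemma scores_emb1:
  "scores (d1 + d2) dk (hconcat d1 Q1 Q2) (emb1 d1 WQ) (emb1 d1 WK) i j = scores d1 dk Q1 WQ WK i j"
  unfolding scores_def sum_split_add by (simp add: emb1_def hconcat_def)

lemma scores_emb2:
  "scores (d1 + d2) dk (hconcat d1 Q1 Q2) (emb2 d1 WQ) (emb2 d1 WK) i j = scores d2 dk Q2 WQ WK i j"
  unfolding scores_def sum_split_add by (simp add: emb2_def hconcat_def)

lemma scores_emb1_fun:
  "scores (d1 + d2) dk (hconcat d1 Q1 Q2) (emb1 d1 WQ) (emb1 d1 WK) = scores d1 dk Q1 WQ WK"
  using scores_emb1 by blast

lemma scores_emb2_fun: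
  "scores (d1 + d2) dk (hconcat d1 Q1 Q2) (emb2 d1 WQ) (emb2 d1 WK) = scores d2 dk Q2 WQ WK"
  using scores_emb2 by blast

lemma ni1: "node_identifying n d1 dk Q1 \<Longrightarrow> node_identifying n (d1 + d2) dk (hconcat d1 Q1 Q2)"
  unfolding node_identifying_def
  apply (elim exE)
  subgoal for WQ WK
    by (rule exI[of _ "emb1 d1 WQ"], rule exI[of _ "emb1 d1 WK"]) (simp only: scores_emb1_fun)
  done

lemma ni2: "node_identifying n d2 dk Q2 \<Longrightarrow> node_identifying n (d1 + d2) dk (hconcat d1 Q1 Q2)"
  unfolding node_identifying_def
  apply (elim exE)
  subgoal for WQ WK
    by (rule exI[of _ "emb2 d1 WQ"], rule exI[of _ "emb2 d1 WK"]) (simp only: scores_emb2_fun)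
  done

lemma ai1: "adjacency_identifying E n d1 dk Q1 \<Longrightarrow> adjacency_identifying E n (d1 + d2) dk (hconcat d1 Q1 Q2)"
  unfolding adjacency_identifying_def
  apply (elim exE)
  subgoal for WQ WK
    by (rule exI[of _ "emb1 d1 WQ"], rule exI[of _ "emb1 d1 WK"]) (simp only: scores_emb1_fun)
  done

lemma ai2: "adjacency_identifying E n d2 dk Q2 \<Longrightarrow> adjacency_identifying E n (d1 + d2) dk (hconcat d1 Q1 Q2)"
  unfolding adjacency_identifying_def
  apply (elim exE)
  subgoal for WQ WK
    by (rule exI[of _ "emb2 d1 WQ"], rule exI[of _ "emb2 d1 WK"]) (simp only: scores_emb2_fun)
  done

lemma frob_split:
  "frob_dist n (d1 + d2) (hconcat d1 A B) (hconcat d1 C D)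
     = sqrt ((\<Sum>i<n. \<Sum>j<d1. (A i j - C i j)\<^sup>2) + (\<Sum>i<n. \<Sum>j<d2. (B i j - D i j)\<^sup>2))"
  unfolding frob_dist_def sum_split_add sum.distrib by (simp add: hconcat_def)

lemma frob_le:
  "frob_dist n (d1 + d2) (hconcat d1 A B) (hconcat d1 C D) \<le> frob_dist n d1 A C + frob_dist n d2 B D"
  unfolding frob_split unfolding frob_dist_def
  by (rule sqrt_add_le_add_sqrt) (auto intro!: sum_nonneg)

lemma frob_same: "frob_dist n d R R = 0"
  by (simp add: frob_dist_def)

lemma suff_both:
  assumes "sufficiently P1 n d1 Q1" "sufficiently P2 n d2 Q2"
    and "\<And>R1 R2. P1 R1 \<Longrightarrow> P2 R2 \<Longrightarrow> P (hconcat d1 R1 R2)"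
  shows "sufficiently P n (d1 + d2) (\<lambda>(a, b). hconcat d1 (Q1 a) (Q2 b))"
proof -
  obtain R1 where R1: "P1 R1" "\<And>e. e > 0 \<Longrightarrow> \<exists>a. frob_dist n d1 (Q1 a) R1 < e"
    using assms(1) unfolding sufficiently_def by blast
  obtain R2 where R2: "P2 R2" "\<And>e. e > 0 \<Longrightarrow> \<exists>b. frob_dist n d2 (Q2 b) R2 < e"
    using assms(2) unfolding sufficiently_def by blast
  show ?thesis unfolding sufficiently_def
  proof (rule exI[of _ "hconcat d1 R1 R2"], intro conjI allI impI)
    show "P (hconcat d1 R1 R2)" using assms(3) R1(1) R2(1) .
    fix e :: real assume e: "e > 0"
    obtain a where a: "frob_dist n d1 (Q1 a) R1 < e/2" using R1(2) e by (metis half_gt_zero)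
    obtain b where b: "frob_dist n d2 (Q2 b) R2 < e/2" using R2(2) e by (metis half_gt_zero)
    have "frob_dist n (d1 + d2) ((\<lambda>(a, b). hconcat d1 (Q1 a) (Q2 b)) (a, b)) (hconcat d1 R1 R2) < e"
      using frob_le[of n d1 d2 "Q1 a" "Q2 b" R1 R2] a b by simp
    then show "\<exists>t. frob_dist n (d1 + d2) ((\<lambda>(a, b). hconcat d1 (Q1 a) (Q2 b)) t) (hconcat d1 R1 R2) < e"
      by blast
  qed
qed

lemma suff_trivial: "sufficiently (\<lambda>_. True) n d Q"
  unfolding sufficiently_def using frob_same by (metis)

lemma suff_left:
  assumes "sufficiently P1 n d1 Q1"
    and "\<And>R1 R2. P1 R1 \<Longrightarrow> P (hconcat d1 R1 R2)"
  shows "sufficiently P n (d1 + d2) (\<lambda>(a, b). hconcat d1 (Q1 a) (Q2 b))"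
  by (rule suff_both[OF assms(1) suff_trivial]) (rule assms(2))

lemma suff_right:
  assumes "sufficiently P2 n d2 Q2"
    and "\<And>R1 R2. P2 R2 \<Longrightarrow> P (hconcat d1 R1 R2)"
  shows "sufficiently P n (d1 + d2) (\<lambda>(a, b). hconcat d1 (Q1 a) (Q2 b))"
  by (rule suff_both[OF suff_trivial assms(1)]) (rule assms(2))

theorem lemmaF11:
  fixes n d1 d2 :: nat and dk :: real and E :: "nat \<Rightarrow> nat \<Rightarrow> bool"
  assumes dk_pos: "dk > 0"
  shows
    \<comment> \<open>plain reading\<close>
    "(\<forall>Q1 Q2 :: mat.
       ((node_identifying n d1 dk Q1 \<or> node_identifying n d2 dk Q2)
          \<longrightarrow> node_identifying n (d1 + d2) dk (hconcat d1 Q1 Q2))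
     \<and> ((adjacency_identifying E n d1 dk Q1 \<or> adjacency_identifying E n d2 dk Q2)
          \<longrightarrow> adjacency_identifying E n (d1 + d2) dk (hconcat d1 Q1 Q2))
     \<and> (((node_identifying n d1 dk Q1 \<and> adjacency_identifying E n d2 dk Q2)
          \<or> (adjacency_identifying E n d1 dk Q1 \<and> node_identifying n d2 dk Q2))
          \<longrightarrow> node_adjacency_identifying E n (d1 + d2) dk (hconcat d1 Q1 Q2)))
     \<and>
     \<comment> \<open>sufficiently reading: Q1, Q2 with independent parameters\<close>
     (\<forall>(Q1 :: 'p \<Rightarrow> mat) (Q2 :: 'q \<Rightarrow> mat).
       let P = (\<lambda>(a, b). hconcat d1 (Q1 a) (Q2 b)) in
       ((sufficiently (node_identifying n d1 dk) n d1 Q1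
           \<or> sufficiently (node_identifying n d2 dk) n d2 Q2)
          \<longrightarrow> sufficiently (node_identifying n (d1 + d2) dk) n (d1 + d2) P)
     \<and> ((sufficiently (adjacency_identifying E n d1 dk) n d1 Q1
           \<or> sufficiently (adjacency_identifying E n d2 dk) n d2 Q2)
          \<longrightarrow> sufficiently (adjacency_identifying E n (d1 + d2) dk) n (d1 + d2) P)
     \<and> (((sufficiently (node_identifying n d1 dk) n d1 Q1
            \<and> sufficiently (adjacency_identifying E n d2 dk) n d2 Q2)
          \<or> (sufficiently (adjacency_identifying E n d1 dk) n d1 Q1
            \<and> sufficiently (node_identifying n d2 dk) n d2 Q2))
          \<longrightarrow> sufficiently (node_adjacency_identifying E n (d1 + d2) dk) n (d1 + d2) P))"
  unfolding Let_def node_adjacency_identifying_def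
proof (intro conjI allI)
  fix Q1 Q2 :: mat
  show "node_identifying n d1 dk Q1 \<or> node_identifying n d2 dk Q2 \<longrightarrow>
          node_identifying n (d1 + d2) dk (hconcat d1 Q1 Q2)" using ni1 ni2 by blast
  show "adjacency_identifying E n d1 dk Q1 \<or> adjacency_identifying E n d2 dk Q2 \<longrightarrow>
          adjacency_identifying E n (d1 + d2) dk (hconcat d1 Q1 Q2)" using ai1 ai2 by blast
  show "node_identifying n d1 dk Q1 \<and> adjacency_identifying E n d2 dk Q2 \<or>
          adjacency_identifying E n d1 dk Q1 \<and> node_identifying n d2 dk Q2 \<longrightarrow>
          node_identifying n (d1 + d2) dk (hconcat d1 Q1 Q2) \<and>
          adjacency_identifying E n (d1 + d2) dk (hconcat d1 Q1 Q2)"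
    using ni1 ni2 ai1 ai2 by (meson ni1 ni2 ai1 ai2)
next
  fix Q1 :: "'p \<Rightarrow> mat" and Q2 :: "'q \<Rightarrow> mat"
  let ?P = "\<lambda>(a, b). hconcat d1 (Q1 a) (Q2 b)"
  show "sufficiently (node_identifying n d1 dk) n d1 Q1 \<or> sufficiently (node_identifying n d2 dk) n d2 Q2 \<longrightarrow>
    sufficiently (node_identifying n (d1 + d2) dk) n (d1 + d2) ?P"
    using suff_left[of "node_identifying n d1 dk" n d1 Q1 "node_identifying n (d1 + d2) dk" d2 Q2]
      suff_right[of "node_identifying n d2 dk" n d2 Q2 "node_identifying n (d1 + d2) dk" d1 Q1]
      ni1 ni2 by blast
  show "sufficiently (adjacency_identifying E n d1 dk) n d1 Q1 \<or> sufficiently (adjacency_identifying E n d2 dk) n d2 Q2 \<longrightarrow>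
    sufficiently (adjacency_identifying E n (d1 + d2) dk) n (d1 + d2) ?P"
    using suff_left[of "adjacency_identifying E n d1 dk" n d1 Q1 "adjacency_identifying E n (d1 + d2) dk" d2 Q2]
      suff_right[of "adjacency_identifying E n d2 dk" n d2 Q2 "adjacency_identifying E n (d1 + d2) dk" d1 Q1]
      ai1 ai2 by blast
  show "sufficiently (node_identifying n d1 dk) n d1 Q1 \<and> sufficiently (adjacency_identifying E n d2 dk) n d2 Q2 \<or>
    sufficiently (adjacency_identifying E n d1 dk) n d1 Q1 \<and> sufficiently (node_identifying n d2 dk) n d2 Q2 \<longrightarrow>
    sufficiently (\<lambda>R. node_identifying n (d1 + d2) dk R \<and> adjacency_identifying E n (d1 + d2) dk R) n (d1 + d2) ?P"
    using suff_both[of "node_identifying n d1 dk" n d1 Q1 "adjacency_identifying E n d2 dk" d2 Q2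
        "\<lambda>R. node_identifying n (d1 + d2) dk R \<and> adjacency_identifying E n (d1 + d2) dk R"]
      suff_both[of "adjacency_identifying E n d1 dk" n d1 Q1 "node_identifying n d2 dk" d2 Q2
        "\<lambda>R. node_identifying n (d1 + d2) dk R \<and> adjacency_identifying E n (d1 + d2) dk R"]
      ni1 ni2 ai1 ai2 by (meson ni1 ni2 ai1 ai2)
qed

end
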